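(* For positive integers $n<m$, $f(S_m,\overline{K_n})=n+m-1$, and this value is achieved by the complete bipartite graph $K_{n,m-1}$ (i.e. $K_{n,m-1}$ is $(S_m,\overline{K_n})$-full).
   Context: All graphs are finite and simple. $S_m=K_{1,m-1}$ is the star with $m$ vertices; $\overline{K_n}$ is the edgeless graph on $n$ vertices. A graph $G$ is $(H_1,H_2)$-full if every vertex of $G$ belongs to an induced subgraph isomorphic to $H_1$ and to an induced subgraph isomorphic to $H_2$; $f(H_1,H_2)$ is the minimum order of an $(H_1,H_2)$-full graph. *)

theory Defs
  imports Main
begin

type_synonym 'a graph = "'a set \<times> ('a \<Rightarrow> 'a \<Rightarrow> bool)"

definition verts :: "'a graph \<Rightarrow> 'a set" where "verts G = fst G"
definition adj :: "'a graph \<Rightarrow> 'a \<Rightarrow> 'a \<Rightarrow> bool" where "adj G = snd G"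

definition simple_graph :: "'a graph \<Rightarrow> bool" where
  "simple_graph G \<longleftrightarrow> finite (verts G) \<and> verts G \<noteq> {} \<and>
     (\<forall>u v. adj G u v \<longrightarrow> u \<in> verts G \<and> v \<in> verts G \<and> u \<noteq> v \<and> adj G v u)"

definition induced_embedding :: "'b graph \<Rightarrow> 'a graph \<Rightarrow> ('b \<Rightarrow> 'a) \<Rightarrow> bool" where
  "induced_embedding H G phi \<longleftrightarrow> inj_on phi (verts H) \<and> phi ` verts H \<subseteq> verts G \<and>
     (\<forall>u\<in>verts H. \<forall>v\<in>verts H. adj H u v \<longleftrightarrow> adj G (phi u) (phi v))"

definition in_induced_copy :: "'b graph \<Rightarrow> 'a graph \<Rightarrow> 'a \<Rightarrow> bool" where
  "in_induced_copy H G v \<longleftrightarrow> (\<exists>phi. induced_embedding H G phi \<and> v \<in> phi ` verts H)"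

definition is_full :: "'b graph \<Rightarrow> 'c graph \<Rightarrow> 'a graph \<Rightarrow> bool" where
  "is_full H1 H2 G \<longleftrightarrow> (\<forall>v\<in>verts G. in_induced_copy H1 G v \<and> in_induced_copy H2 G v)"

text \<open>Minimum order of an (H1,H2)-full graph (graphs up to isomorphism, so vertices in nat).\<close>
definition f_full :: "'b graph \<Rightarrow> 'c graph \<Rightarrow> nat" where
  "f_full H1 H2 = (LEAST k. \<exists>G :: nat graph. simple_graph G \<and> card (verts G) = k \<and> is_full H1 H2 G)"

definition star :: "nat \<Rightarrow> nat graph" where
  "star m = ({0..<m}, \<lambda>u v. u < m \<and> v < m \<and> u \<noteq> v \<and> (u = 0 \<or> v = 0))"

definition edgeless :: "nat \<Rightarrow> nat graph" where
  "edgeless n = ({0..<n}, \<lambda>u v. False)"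

definition complete_bipartite :: "nat \<Rightarrow> nat \<Rightarrow> nat graph" where
  "complete_bipartite a b = ({0..<a+b}, \<lambda>u v. u < a + b \<and> v < a + b \<and> ((u < a) \<noteq> (v < a)))"

end

theory Submission
  imports Defs "HOL-Combinatorics.Transposition"
begin

lemma lower:
  fixes G :: "'a graph"
  assumes sg: "simple_graph G" and full: "is_full (star m) (edgeless n) G" and m: "0 < m"
  shows "n + m - 1 \<le> card (verts G)"
proof -
  have fin: "finite (verts G)" and ne: "verts G \<noteq> {}" using sg by (auto simp: simple_graph_def)
  obtain v where v: "v \<in> verts G" using ne by auto
  then obtain phi where phi: "induced_embedding (star m) G phi" using full
    by (auto simp: is_full_def in_induced_copy_def)
  have vs: "verts (star m) = {0..<m}" by (simp add: star_def verts_def)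
  have ve: "verts (edgeless n) = {0..<n}" by (simp add: edgeless_def verts_def)
  define c where "c = phi 0"
  have c: "c \<in> verts G" using phi m unfolding induced_embedding_def c_def vs by auto
  then obtain psi where psi: "induced_embedding (edgeless n) G psi" and cI: "c \<in> psi ` {0..<n}"
    using full ve by (auto simp: is_full_def in_induced_copy_def)
  define L where "L = phi ` {1..<m}"
  define I where "I = psi ` {0..<n}"
  have cL: "card L = m - 1" unfolding L_def
    using phi vs by (subst card_image) (auto simp: induced_embedding_def intro: inj_on_subset)
  have cI': "card I = n" unfolding I_def
    using psi ve by (subst card_image) (auto simp: induced_embedding_def)
  have sub: "L \<union> I \<subseteq> verts G" using phi psi vs ve
    unfolding L_def I_def induced_embedding_def by auto
  have disj: "L \<inter> I = {}"
  proof (rule ccontr)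
    assume "L \<inter> I \<noteq> {}"
    then obtain i a where i: "i \<in> {1..<m}" and a: "a < n" and eq: "phi i = psi a"
    proof -
      from \<open>L \<inter> I \<noteq> {}\<close> obtain x where "x \<in> L" "x \<in> I" by blast
      then obtain i a where "i \<in> {1..<m}" "x = phi i" "a \<in> {0..<n}" "x = psi a"
        unfolding L_def I_def by blast
      then show ?thesis using that by auto
    qed
    obtain b where b: "b < n" and cb: "c = psi b" using cI by auto
    have "adj (star m) 0 i" using i by (simp add: adj_def star_def)
    hence "adj G c (phi i)" using phi vs i m unfolding induced_embedding_def c_def by auto
    moreover have "\<not> adj G (psi b) (psi a)" using psi ve a b
      unfolding induced_embedding_def by (auto simp: adj_def edgeless_def)
    ultimately show False using eq cb by simp
  qed
  have "card (L \<union> I) = m - 1 + n"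
    using card_Un_disjoint[OF finite_subset[OF _ fin] finite_subset[OF _ fin] disj] sub cL cI' by auto
  moreover have "card (L \<union> I) \<le> card (verts G)" using card_mono[OF fin sub] .
  ultimately show ?thesis using m by linarith
qed

lemma kb_simple: "simple_graph (complete_bipartite a b) \<longleftrightarrow> a + b > 0"
  by (auto simp: simple_graph_def complete_bipartite_def verts_def adj_def)

lemma kb_full:
  assumes "0 < n" "n < m"
  shows "is_full (star m) (edgeless n) (complete_bipartite n (m - 1))"
  unfolding is_full_def
proof
  fix v assume v: "v \<in> verts (complete_bipartite n (m - 1))"
  hence vl: "v < n + (m - 1)" by (simp add: complete_bipartite_def verts_def)
  define ctr where "ctr = (if v < n then v else 0)"
  define phi where "phi = (\<lambda>i::nat. if i = 0 then ctr else n + i - 1)"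
  have ctr: "ctr < n" using assms by (simp add: ctr_def)
  have e1: "induced_embedding (star m) (complete_bipartite n (m - 1)) phi"
    unfolding induced_embedding_def
  proof (intro conjI)
    show "inj_on phi (verts (star m))" using ctr
      by (auto simp: inj_on_def phi_def star_def verts_def split: if_splits)
    show "phi ` verts (star m) \<subseteq> verts (complete_bipartite n (m - 1))" using ctr assms
      by (auto simp: phi_def star_def verts_def complete_bipartite_def)
    show "\<forall>u\<in>verts (star m). \<forall>w\<in>verts (star m). adj (star m) u w =
        adj (complete_bipartite n (m - 1)) (phi u) (phi w)" using ctr assms
      by (auto simp: phi_def star_def verts_def adj_def complete_bipartite_def)
  qed
  have "v \<in> phi ` verts (star m)"
  proof (cases "v < n")
    case True
    then show ?thesis using assms by (auto simp: phi_def ctr_def star_def verts_def image_iff intro!: bexI[of _ 0])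
  next
    case False
    then have "phi (v - n + 1) = v" "v - n + 1 < m" using vl assms by (auto simp: phi_def)
    then show ?thesis by (force simp: star_def verts_def)
  qed
  hence A: "in_induced_copy (star m) (complete_bipartite n (m - 1)) v"
    using e1 by (auto simp: in_induced_copy_def)
  have B: "in_induced_copy (edgeless n) (complete_bipartite n (m - 1)) v"
  proof (cases "v < n")
    case True
    have "induced_embedding (edgeless n) (complete_bipartite n (m - 1)) id"
      using assms by (auto simp: induced_embedding_def edgeless_def verts_def adj_def complete_bipartite_def)
    then show ?thesis unfolding in_induced_copy_def using True
      by (intro exI[of _ id]) (auto simp: edgeless_def verts_def)
  next
    case False
    define j where "j = v - n"
    have j: "j < m - 1" using False vl by (simp add: j_def)
    define psi where "psi = (\<lambda>i. n + transpose 0 j i)"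
    have tb: "\<And>i. i < n \<Longrightarrow> transpose 0 j i < m - 1" using j assms
      by (auto simp: transpose_def)
    have "induced_embedding (edgeless n) (complete_bipartite n (m - 1)) psi"
      unfolding induced_embedding_def
    proof (intro conjI)
      show "inj_on psi (verts (edgeless n))" by (auto simp: inj_on_def psi_def transpose_eq_iff)
      show "psi ` verts (edgeless n) \<subseteq> verts (complete_bipartite n (m - 1))"
        using tb by (auto simp: psi_def edgeless_def verts_def complete_bipartite_def)
      show "\<forall>u\<in>verts (edgeless n). \<forall>w\<in>verts (edgeless n). adj (edgeless n) u w =
          adj (complete_bipartite n (m - 1)) (psi u) (psi w)"
        by (auto simp: psi_def edgeless_def adj_def complete_bipartite_def)
    qed
    moreover have "v \<in> psi ` verts (edgeless n)"
      using assms False unfolding psi_def j_def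
      by (auto simp: edgeless_def verts_def image_iff intro!: bexI[of _ 0])
    ultimately show ?thesis unfolding in_induced_copy_def by blast
  qed
  show "in_induced_copy (star m) (complete_bipartite n (m - 1)) v \<and>
        in_induced_copy (edgeless n) (complete_bipartite n (m - 1)) v" using A B by blast
qed

theorem claim4p1:
  fixes n m :: nat
  assumes "0 < n" and "n < m"
  shows "f_full (star m) (edgeless n) = n + m - 1
       \<and> simple_graph (complete_bipartite n (m - 1))
       \<and> is_full (star m) (edgeless n) (complete_bipartite n (m - 1))"
proof -
  have S: "simple_graph (complete_bipartite n (m - 1))" using assms kb_simple by simp
  have F: "is_full (star m) (edgeless n) (complete_bipartite n (m - 1))" using kb_full assms .
  have C: "card (verts (complete_bipartite n (m - 1))) = n + m - 1"
    using assms by (simp add: complete_bipartite_def verts_def)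
  have "f_full (star m) (edgeless n) = n + m - 1"
    unfolding f_full_def
  proof (rule Least_equality)
    show "\<exists>G :: nat graph. simple_graph G \<and> card (verts G) = n + m - 1 \<and> is_full (star m) (edgeless n) G"
      using S F C by blast
  next
    fix k assume "\<exists>G :: nat graph. simple_graph G \<and> card (verts G) = k \<and> is_full (star m) (edgeless n) G"
    then obtain G :: "nat graph" where "simple_graph G" "card (verts G) = k" "is_full (star m) (edgeless n) G"
      by blast
    then show "n + m - 1 \<le> k" using lower[of G m n] assms by simp
  qed
  then show ?thesis using S F by blast
qed

end
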